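(* Let $(X,\|\cdot,\cdot\|)$ be a linear 2-normed space and let $E$ be a nonempty (sequentially) closed and bounded subset of $X$. Let $T:E\to E$ be a contraction. Then $T$ has a unique fixed point in $E$.
   Context: A linear 2-normed space is a real linear space $X$ of dimension greater than 1 with a function $\|\cdot,\cdot\|:X\times X\to\mathbb{R}$ such that: $\|x,y\|=0$ iff $x,y$ are linearly dependent; $\|x,y\|=\|y,x\|$; $\|\alpha x,y\|=|\alpha|\,\|x,y\|$; $\|x+y,z\|\le\|x,z\|+\|y,z\|$. A sequence $x_n\to x$ means $\|x_n-x,z\|\to0$ for every $z\in X$. $\overline{E}=\{x\in X:$ some sequence in $E$ converges to $x\}$, and $E$ is (sequentially) closed if $E=\overline{E}$. For $e\in E$, $E$ is $e$-bounded if there is $M>0$ with $\|x,e\|\le M$ for all $x\in E$; $E$ is bounded if it is $e$-bounded for every $e\in E$. $T:E\to E$ is a contraction if there exists $k\in(0,1)$ with $\|Tx-Ty,z\|\le k\|x-y,z\|$ for all $x,y\in E$ and all $z\in X$. *)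

theory Defs
  imports Main "HOL-Analysis.Analysis"
begin

definition lin_dep2 :: "'a::real_vector \<Rightarrow> 'a \<Rightarrow> bool" where
  "lin_dep2 x y \<longleftrightarrow> (\<exists>a b::real. (a \<noteq> 0 \<or> b \<noteq> 0) \<and> a *\<^sub>R x + b *\<^sub>R y = 0)"

text \<open>A linear 2-normed space: a real vector space of dimension greater than 1
  (i.e. containing two linearly independent vectors) with a 2-norm.\<close>
definition two_normed :: "('a::real_vector \<Rightarrow> 'a \<Rightarrow> real) \<Rightarrow> bool" where
  "two_normed N \<longleftrightarrow>
     (\<exists>x y::'a. \<not> lin_dep2 x y) \<and>
     (\<forall>x y. N x y = 0 \<longleftrightarrow> lin_dep2 x y) \<and>
     (\<forall>x y. N x y = N y x) \<and>
     (\<forall>a x y. N (a *\<^sub>R x) y = \<bar>a\<bar> * N x y) \<and>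
     (\<forall>x y z. N (x + y) z \<le> N x z + N y z)"

definition conv2 :: "('a::real_vector \<Rightarrow> 'a \<Rightarrow> real) \<Rightarrow> (nat \<Rightarrow> 'a) \<Rightarrow> 'a \<Rightarrow> bool" where
  "conv2 N s x \<longleftrightarrow> (\<forall>z. (\<lambda>n. N (s n - x) z) \<longlonglongrightarrow> 0)"

definition closure2 :: "('a::real_vector \<Rightarrow> 'a \<Rightarrow> real) \<Rightarrow> 'a set \<Rightarrow> 'a set" where
  "closure2 N E = {x. \<exists>s. (\<forall>n. s n \<in> E) \<and> conv2 N s x}"

definition closed2 :: "('a::real_vector \<Rightarrow> 'a \<Rightarrow> real) \<Rightarrow> 'a set \<Rightarrow> bool" where
  "closed2 N E \<longleftrightarrow> E = closure2 N E"

definition e_bounded2 :: "('a::real_vector \<Rightarrow> 'a \<Rightarrow> real) \<Rightarrow> 'a set \<Rightarrow> 'a \<Rightarrow> bool" where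
  "e_bounded2 N E e \<longleftrightarrow> (\<exists>M>0. \<forall>x\<in>E. N x e \<le> M)"

definition bounded2 :: "('a::real_vector \<Rightarrow> 'a \<Rightarrow> real) \<Rightarrow> 'a set \<Rightarrow> bool" where
  "bounded2 N E \<longleftrightarrow> (\<forall>e\<in>E. e_bounded2 N E e)"

definition contraction2 :: "('a::real_vector \<Rightarrow> 'a \<Rightarrow> real) \<Rightarrow> 'a set \<Rightarrow> ('a \<Rightarrow> 'a) \<Rightarrow> bool" where
  "contraction2 N E T \<longleftrightarrow> T ` E \<subseteq> E \<and>
     (\<exists>k. 0 < k \<and> k < 1 \<and> (\<forall>x\<in>E. \<forall>y\<in>E. \<forall>z. N (T x - T y) z \<le> k * N (x - y) z))"

end

theory Submission
  imports Defs
begin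

lemma tn_zero: "two_normed N \<Longrightarrow> N 0 z = 0"
  unfolding two_normed_def lin_dep2_def
  by (metis add.commute add_0 scaleR_eq_0_iff zero_neq_one)

lemma tn_neg: "two_normed N \<Longrightarrow> N (- x) z = N x z"
  unfolding two_normed_def
  by (metis abs_minus_cancel abs_one mult_1 scaleR_minus1_left)

lemma tn_scale: "two_normed N \<Longrightarrow> N (a *\<^sub>R x) z = \<bar>a\<bar> * N x z"
  unfolding two_normed_def by blast

lemma tn_tri: "two_normed N \<Longrightarrow> N (x + y) z \<le> N x z + N y z"
  unfolding two_normed_def by blast

lemma tn_nonneg: assumes "two_normed N" shows "0 \<le> N x z"
proof -
  have "N (x + - x) z \<le> N x z + N (- x) z" using tn_tri[OF assms] .
  thus ?thesis using tn_zero[OF assms] tn_neg[OF assms] by simp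
qed

lemma tn_tri3: assumes "two_normed N" shows "N (x - y) z \<le> N (x - w) z + N (w - y) z"
  using tn_tri[OF assms, of "x - w" "w - y" z] by simp

lemma tn_zero_iff: "two_normed N \<Longrightarrow> N x z = 0 \<longleftrightarrow> lin_dep2 x z"
  unfolding two_normed_def by blast

lemma dep_mult: assumes "lin_dep2 y d" "d \<noteq> 0" shows "\<exists>c. y = c *\<^sub>R d"
proof -
  obtain a b where ab: "a \<noteq> 0 \<or> b \<noteq> 0" "a *\<^sub>R y + b *\<^sub>R d = 0"
    using assms(1) unfolding lin_dep2_def by blast
  show ?thesis
  proof (cases "a = 0")
    case True then show ?thesis using ab assms(2) by simp
  next
    case False
    then have "y = (- b / a) *\<^sub>R d" using ab(2)
      by (metis (no_types, lifting) add_eq_0_iff2 divide_inverse_commute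
          inverse_eq_divide minus_mult_minus mult_minus_left scaleR_scaleR
          scaleR_minus_left scaleR_one left_inverse)
    then show ?thesis by blast
  qed
qed

lemma exists_indep: assumes "two_normed N" "d \<noteq> 0" shows "\<exists>z. N d z \<noteq> 0"
proof (rule ccontr)
  assume "\<not> ?thesis"
  then have h: "\<And>z. lin_dep2 z d"
    using tn_zero_iff[OF assms(1)] assms(1) unfolding two_normed_def by metis
  obtain a b :: 'a where nd: "\<not> lin_dep2 a b" using assms(1) unfolding two_normed_def by blast
  obtain s where s: "a = s *\<^sub>R d" using dep_mult[OF h assms(2)] by blast
  obtain t where t: "b = t *\<^sub>R d" using dep_mult[OF h assms(2)] by blast
  show False
  proof (cases "s = 0")
    case True
    then have "1 *\<^sub>R a + 0 *\<^sub>R b = 0" using s by simp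
    then have "lin_dep2 a b" unfolding lin_dep2_def by (metis zero_neq_one)
    then show False using nd by simp
  next
    case False
    have "t *\<^sub>R a + (- s) *\<^sub>R b = 0" using s t by (simp add: algebra_simps)
    moreover have "t \<noteq> 0 \<or> - s \<noteq> 0" using False by simp
    ultimately have "lin_dep2 a b" unfolding lin_dep2_def by blast
    then show False using nd by simp
  qed
qed

lemma zero_all: assumes "two_normed N" "\<And>z. N x z = 0" shows "x = 0"
  using exists_indep[OF assms(1)] assms(2) by blast

theorem lemma3p10:
  fixes N :: "'a::real_vector \<Rightarrow> 'a \<Rightarrow> real" and E :: "'a set" and T :: "'a \<Rightarrow> 'a"
  assumes "two_normed N"
    and "E \<noteq> {}"
    and "closed2 N E"
    and "bounded2 N E"
    and "contraction2 N E T"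
  shows "\<exists>!x. x \<in> E \<and> T x = x"
proof -
  note tn = assms(1)
  obtain k where k: "0 < k" "k < 1" and
    kc: "\<And>x y z. x \<in> E \<Longrightarrow> y \<in> E \<Longrightarrow> N (T x - T y) z \<le> k * N (x - y) z"
    using assms(5) unfolding contraction2_def by blast
  have TE: "\<And>x. x \<in> E \<Longrightarrow> T x \<in> E" using assms(5) unfolding contraction2_def by blast
  have uniq: "p = q" if "p \<in> E" "q \<in> E" "T p = p" "T q = q" for p q
  proof -
    have "N (p - q) z = 0" for z
    proof -
      have "N (p - q) z \<le> k * N (p - q) z" using kc[OF that(1,2)] that(3,4) by simp
      then show ?thesis using tn_nonneg[OF tn, of "p - q" z] k
        by (smt (verit) mult_le_cancel_right1)
    qed
    then show ?thesis using zero_all[OF tn] by fastforce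
  qed
  obtain x0 where x0: "x0 \<in> E" using assms(2) by blast
  have ex: "\<exists>p. p \<in> E \<and> T p = p"
  proof (cases "T x0 = x0")
    case True then show ?thesis using x0 by blast
  next
    case False
    define d where "d = T x0 - x0"
    have d0: "d \<noteq> 0" using False d_def by simp
    define x where "x n = (T ^^ n) x0" for n
    have xE: "x n \<in> E" for n by (induction n) (auto simp: x_def x0 TE)
    have xS: "x (Suc n) = T (x n)" for n by (simp add: x_def)
    have bd: "N (x (Suc n) - x n) z \<le> k ^ n * N d z" for n z
    proof (induction n)
      case 0 then show ?case by (simp add: x_def d_def)
    next
      case (Suc n)
      have "N (T (x (Suc n)) - T (x n)) z \<le> k * N (x (Suc n) - x n) z"
        by (rule kc[OF xE xE])
      then have "N (x (Suc (Suc n)) - x (Suc n)) z \<le> k * N (x (Suc n) - x n) z"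
        by (simp add: xS)
      also have "\<dots> \<le> k * (k ^ n * N d z)" using Suc k by simp
      finally show ?case by simp
    qed
    have dep: "lin_dep2 (x (Suc n) - x n) d" for n
    proof -
      have "lin_dep2 d d" unfolding lin_dep2_def
        by (rule exI[of _ 1], rule exI[of _ "-1"]) simp
      then have "N d d = 0" using tn_zero_iff[OF tn] by blast
      then have "N (x (Suc n) - x n) d \<le> 0" using bd[of n d] by simp
      then show ?thesis using tn_nonneg[OF tn] tn_zero_iff[OF tn] by (meson order_antisym)
    qed
    define c where "c n = (SOME c. x (Suc n) - x n = c *\<^sub>R d)" for n
    have cd: "x (Suc n) - x n = c n *\<^sub>R d" for n
      unfolding c_def by (rule someI_ex) (rule dep_mult[OF dep d0])
    obtain z0 where z0: "N d z0 \<noteq> 0" using exists_indep[OF tn d0] by blast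
    have z0p: "N d z0 > 0" using z0 tn_nonneg[OF tn, of d z0] by simp
    have cb: "norm (c n) \<le> k ^ n" for n
    proof -
      have "\<bar>c n\<bar> * N d z0 \<le> k ^ n * N d z0" using bd[of n z0] cd[of n] tn_scale[OF tn] by simp
      then show ?thesis using z0p by simp
    qed
    have sc: "summable c"
      by (rule summable_comparison_test[OF _ summable_geometric[of k]])
         (use cb k in auto)
    define C where "C = suminf c"
    define p where "p = x0 + C *\<^sub>R d"
    have xform: "x n = x0 + (\<Sum>i<n. c i) *\<^sub>R d" for n
    proof (induction n)
      case 0 then show ?case by (simp add: x_def)
    next
      case (Suc n)
      have "x (Suc n) = x n + c n *\<^sub>R d" using cd[of n] by (simp add: algebra_simps)
      then show ?case using Suc by (simp add: algebra_simps)
    qed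
    have lim: "(\<lambda>n. (\<Sum>i<n. c i)) \<longlonglongrightarrow> C" unfolding C_def using summable_LIMSEQ[OF sc] .
    have conv: "(\<lambda>n. N (x n - p) z) \<longlonglongrightarrow> 0" for z
    proof -
      have eq: "N (x n - p) z = \<bar>(\<Sum>i<n. c i) - C\<bar> * N d z" for n
      proof -
        have "x n - p = ((\<Sum>i<n. c i) - C) *\<^sub>R d" using xform[of n]
          by (simp add: p_def algebra_simps)
        then show ?thesis using tn_scale[OF tn] by simp
      qed
      have "(\<lambda>n. \<bar>(\<Sum>i<n. c i) - C\<bar> * N d z) \<longlonglongrightarrow> \<bar>C - C\<bar> * N d z"
        by (intro tendsto_intros lim)
      then show ?thesis using eq by simp
    qed
    have pE: "p \<in> E"
      using assms(3) unfolding closed2_def closure2_def conv2_def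
      using xE conv by blast
    have "N (T p - p) z = 0" for z
    proof -
      have le: "N (T p - p) z \<le> k * N (x n - p) z + N (x (Suc n) - p) z" for n
      proof -
        have "N (T p - p) z \<le> N (T p - x (Suc n)) z + N (x (Suc n) - p) z"
          using tn_tri3[OF tn] .
        also have "N (T p - x (Suc n)) z \<le> k * N (p - x n) z"
          using kc[OF pE xE] xS by simp
        also have "N (p - x n) z = N (x n - p) z"
          using tn_neg[OF tn, of "x n - p" z] by simp
        finally show ?thesis by simp
      qed
      have "(\<lambda>n. k * N (x n - p) z + N (x (Suc n) - p) z) \<longlonglongrightarrow> k * 0 + 0"
        by (intro tendsto_intros conv LIMSEQ_Suc)
      then have "N (T p - p) z \<le> 0"
        using le by (intro LIMSEQ_le_const) auto
      then show ?thesis using tn_nonneg[OF tn, of "T p - p" z] by simp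
    qed
    then have "T p = p" using zero_all[OF tn] by fastforce
    then show ?thesis using pE by blast
  qed
  show ?thesis using ex uniq by blast
qed

end
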